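(* Let $n\ge3$, $K,H\le\mathbb{H}^\times$ finite with $[K,K]\le H\trianglelefteq K$, $H\ne\{1\}$ and $K/H$ cyclic. Let $\lambda=(\lambda_1,\dots,\lambda_k)$ be a partition of $n$, $\alpha,\beta\in K$, and $d=\gcd([K:H],\lambda_1,\dots,\lambda_k)$. Then $P_\lambda^\alpha$ and $P_\lambda^\beta$ are conjugate in $G_n(K,H)$ if and only if the order of $\alpha\beta^{-1}H$ in $K/H$ divides $[K:H]/d$.
   Context: $\mathbb{H}$: quaternions. $A_n(K,H)$: diagonal matrices $\mathrm{diag}(k_1,\dots,k_n)$, $k_i\in K$, $k_1\cdots k_n\in H$; $G_n(K,H)$: group generated by $A_n(K,H)$ and the permutation matrices $M(\sigma)$, acting on $\mathbb{H}^n$ by left multiplication. For a partition $\lambda=(\lambda_1,\dots,\lambda_k)$ of $n$ with partial sums $m_i=\lambda_1+\dots+\lambda_i$, $m_0=0$, let $I_i=\{m_{i-1}+1,\dots,m_i\}$; for $\alpha\in K$ let $D_\alpha=\mathrm{diag}(\alpha,1,\dots,1)$. Then $P_\lambda^\alpha=P_1\times\dots\times P_k$ with $P_i=\{D_\alpha M(\sigma)D_\alpha^{-1}:\sigma\in\mathrm{Sym}(I_i)\}$ (the symmetric groups permuting the vectors $\alpha e_1, e_2,\dots,e_{m_1}$, resp. $e_{m_{i-1}+1},\dots,e_{m_i}$). *)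

theory Defs
  imports "HOL-Algebra.Algebra" "HOL-Combinatorics.Permutations"
begin

datatype quat = Quat (qre: real) (qi: real) (qj: real) (qk: real)

instantiation quat :: ring_1
begin

definition "0 = Quat 0 0 0 0"
definition "1 = Quat 1 0 0 0"
definition "x + y = Quat (qre x + qre y) (qi x + qi y) (qj x + qj y) (qk x + qk y)"
definition "- x = Quat (- qre x) (- qi x) (- qj x) (- qk x)"
definition "x - y = Quat (qre x - qre y) (qi x - qi y) (qj x - qj y) (qk x - qk y)"
definition "x * y = Quat
   (qre x * qre y - qi x * qi y - qj x * qj y - qk x * qk y)
   (qre x * qi y + qi x * qre y + qj x * qk y - qk x * qj y)
   (qre x * qj y - qi x * qk y + qj x * qre y + qk x * qi y)
   (qre x * qk y + qi x * qj y - qj x * qi y + qk x * qre y)"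

instance
  by standard
     (simp_all add: zero_quat_def one_quat_def plus_quat_def uminus_quat_def
        minus_quat_def times_quat_def quat.expand algebra_simps)

end

definition quat_units :: "quat monoid" where
  "quat_units = \<lparr>carrier = UNIV - {0}, monoid.mult = (*), one = 1\<rparr>"

section \<open>Quaternionic n x n matrices (indices 0..n-1), acting on H^n from the left\<close>

type_synonym qmat = "nat \<Rightarrow> nat \<Rightarrow> quat"

definition qmat_mult :: "nat \<Rightarrow> qmat \<Rightarrow> qmat \<Rightarrow> qmat" where
  "qmat_mult n A B = (\<lambda>i j. if i < n \<and> j < n then (\<Sum>l<n. A i l * B l j) else 0)"

definition qmat_one :: "nat \<Rightarrow> qmat" where
  "qmat_one n = (\<lambda>i j. if i < n \<and> j < n \<and> i = j then 1 else 0)"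

definition qmat_monoid :: "nat \<Rightarrow> qmat monoid" where
  "qmat_monoid n = \<lparr>carrier = {A. \<forall>i j. (n \<le> i \<or> n \<le> j) \<longrightarrow> A i j = 0},
                    monoid.mult = qmat_mult n, one = qmat_one n\<rparr>"

definition qdiag :: "nat \<Rightarrow> (nat \<Rightarrow> quat) \<Rightarrow> qmat" where
  "qdiag n k = (\<lambda>i j. if i < n \<and> j < n \<and> i = j then k i else 0)"

definition perm_mat :: "nat \<Rightarrow> (nat \<Rightarrow> nat) \<Rightarrow> qmat" where
  "perm_mat n \<sigma> = (\<lambda>i j. if i < n \<and> j < n \<and> i = \<sigma> j then 1 else 0)"

definition A_n :: "nat \<Rightarrow> quat set \<Rightarrow> quat set \<Rightarrow> qmat set" where
  "A_n n K H = {qdiag n k | k. (\<forall>i<n. k i \<in> K) \<and> foldr (*) (map k [0..<n]) 1 \<in> H}"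

definition G_n :: "nat \<Rightarrow> quat set \<Rightarrow> quat set \<Rightarrow> qmat set" where
  "G_n n K H = generate (qmat_monoid n)
      (A_n n K H \<union> {perm_mat n \<sigma> | \<sigma>. \<sigma> permutes {0..<n}})"

text \<open>Partial sums \<open>m_i = \<lambda>_1 + ... + \<lambda>_i\<close>; block \<open>I_i\<close> (i = 1..k) in 0-based indexing
  is \<open>{m_{i-1} ..< m_i}\<close>.\<close>
definition psum :: "nat list \<Rightarrow> nat \<Rightarrow> nat" where
  "psum lam i = sum_list (take i lam)"

definition block :: "nat list \<Rightarrow> nat \<Rightarrow> nat set" where
  "block lam i = {psum lam (i - 1) ..< psum lam i}"

definition D_mat :: "nat \<Rightarrow> quat \<Rightarrow> qmat" where
  "D_mat n \<alpha> = qdiag n (\<lambda>i. if i = 0 then \<alpha> else 1)"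

definition P_block :: "nat \<Rightarrow> nat list \<Rightarrow> quat \<Rightarrow> nat \<Rightarrow> qmat set" where
  "P_block n lam \<alpha> i = {qmat_mult n (qmat_mult n (D_mat n \<alpha>) (perm_mat n \<sigma>))
                            (D_mat n (inv\<^bsub>quat_units\<^esub> \<alpha>)) | \<sigma>. \<sigma> permutes block lam i}"

fun set_prod_list :: "nat \<Rightarrow> qmat set list \<Rightarrow> qmat set" where
  "set_prod_list n [] = {qmat_one n}"
| "set_prod_list n (S # Ss) = {qmat_mult n A B | A B. A \<in> S \<and> B \<in> set_prod_list n Ss}"

definition P_lam :: "nat \<Rightarrow> nat list \<Rightarrow> quat \<Rightarrow> qmat set" where
  "P_lam n lam \<alpha> = set_prod_list n (map (P_block n lam \<alpha>) [1..<Suc (length lam)])"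

definition is_partition :: "nat list \<Rightarrow> nat \<Rightarrow> bool" where
  "is_partition lam n \<longleftrightarrow> (\<forall>x\<in>set lam. 0 < x) \<and> sorted (rev lam) \<and> sum_list lam = n"

definition conj_in :: "nat \<Rightarrow> qmat set \<Rightarrow> qmat set \<Rightarrow> qmat set \<Rightarrow> bool" where
  "conj_in n G P Q \<longleftrightarrow> (\<exists>g\<in>G. (\<lambda>A. qmat_mult n (qmat_mult n g A) (inv\<^bsub>qmat_monoid n\<^esub> g)) ` P = Q)"

end

theory Submission
  imports Defs
begin



definition qnorm :: "quat \<Rightarrow> real" where
  "qnorm q = qre q ^ 2 + qi q ^ 2 + qj q ^ 2 + qk q ^ 2"

definition qinv :: "quat \<Rightarrow> quat" where
  "qinv q = Quat (qre q / qnorm q) (- qi q / qnorm q) (- qj q / qnorm q) (- qk q / qnorm q)"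

lemma qnorm_pos: "q \<noteq> 0 \<Longrightarrow> qnorm q > 0"
proof -
  assume "q \<noteq> 0"
  then have "qre q \<noteq> 0 \<or> qi q \<noteq> 0 \<or> qj q \<noteq> 0 \<or> qk q \<noteq> 0"
    by (cases q) (auto simp: zero_quat_def)
  moreover have "qre q ^ 2 \<ge> 0" "qi q ^ 2 \<ge> 0" "qj q ^ 2 \<ge> 0" "qk q ^ 2 \<ge> 0" by simp_all
  ultimately show ?thesis unfolding qnorm_def
    by (smt (verit) power2_less_eq_zero_iff)
qed

lemma qinv_right: "q \<noteq> 0 \<Longrightarrow> q * qinv q = 1"
proof -
  assume q: "q \<noteq> 0"
  have N: "qnorm q \<noteq> 0" using qnorm_pos[OF q] by simp
  show ?thesis using N
    by (simp add: times_quat_def qinv_def one_quat_def quat.expand field_simps)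
       (simp add: qnorm_def power2_eq_square algebra_simps)
qed

lemma qinv_left: "q \<noteq> 0 \<Longrightarrow> qinv q * q = 1"
proof -
  assume q: "q \<noteq> 0"
  have N: "qnorm q \<noteq> 0" using qnorm_pos[OF q] by simp
  show ?thesis using N
    by (simp add: times_quat_def qinv_def one_quat_def quat.expand field_simps)
       (simp add: qnorm_def power2_eq_square algebra_simps)
qed

lemma qinv_nz: "q \<noteq> 0 \<Longrightarrow> qinv q \<noteq> 0"
  using qinv_right by force

lemma quat_mult_nz: "(x::quat) \<noteq> 0 \<Longrightarrow> y \<noteq> 0 \<Longrightarrow> x * y \<noteq> 0"
proof
  assume x: "x \<noteq> 0" and y: "y \<noteq> 0" and "x * y = 0"
  then have "qinv x * (x * y) = 0" by simp
  then have "y = 0" using qinv_left[OF x] by (simp add: mult.assoc[symmetric])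
  with y show False by simp
qed

lemma group_quat_units: "group quat_units"
proof (rule groupI)
  fix x y assume "x \<in> carrier quat_units" "y \<in> carrier quat_units"
  then show "x \<otimes>\<^bsub>quat_units\<^esub> y \<in> carrier quat_units"
    by (simp add: quat_units_def quat_mult_nz)
next
  show "\<one>\<^bsub>quat_units\<^esub> \<in> carrier quat_units" by (simp add: quat_units_def)
next
  fix x y z show "x \<otimes>\<^bsub>quat_units\<^esub> y \<otimes>\<^bsub>quat_units\<^esub> z = x \<otimes>\<^bsub>quat_units\<^esub> (y \<otimes>\<^bsub>quat_units\<^esub> z)"
    by (simp add: quat_units_def mult.assoc)
next
  fix x show "\<one>\<^bsub>quat_units\<^esub> \<otimes>\<^bsub>quat_units\<^esub> x = x" by (simp add: quat_units_def)
next
  fix x assume "x \<in> carrier quat_units"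
  then show "\<exists>y\<in>carrier quat_units. y \<otimes>\<^bsub>quat_units\<^esub> x = \<one>\<^bsub>quat_units\<^esub>"
    by (intro bexI[of _ "qinv x"]) (auto simp: quat_units_def qinv_left qinv_nz)
qed

lemma inv_quat_units: "q \<noteq> 0 \<Longrightarrow> inv\<^bsub>quat_units\<^esub> q = qinv q"
proof -
  assume q: "q \<noteq> 0"
  interpret group quat_units by (rule group_quat_units)
  have "qinv q = inv\<^bsub>quat_units\<^esub> q"
    by (rule inv_unique') (auto simp: quat_units_def q qinv_nz qinv_left qinv_right)
  then show ?thesis by simp
qed




definition mon :: "nat \<Rightarrow> (nat \<Rightarrow> nat) \<Rightarrow> (nat \<Rightarrow> quat) \<Rightarrow> qmat" where
  "mon n \<tau> e = (\<lambda>i j. if i < n \<and> j < n \<and> i = \<tau> j then e j else 0)"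

lemma mon_mult:
  assumes "\<sigma> permutes {..<n}"
  shows "qmat_mult n (mon n \<tau> e) (mon n \<sigma> f) = mon n (\<tau> \<circ> \<sigma>) (\<lambda>j. e (\<sigma> j) * f j)"
proof (rule ext, rule ext)
  fix i j
  show "qmat_mult n (mon n \<tau> e) (mon n \<sigma> f) i j = mon n (\<tau> \<circ> \<sigma>) (\<lambda>j. e (\<sigma> j) * f j) i j"
  proof (cases "i < n \<and> j < n")
    case True
    then have sj: "\<sigma> j < n" using permutes_in_image[OF assms] by auto
    have "(\<Sum>l<n. mon n \<tau> e i l * mon n \<sigma> f l j) =
          (\<Sum>l<n. if l = \<sigma> j then (if i = \<tau> l then e l else 0) * f j else 0)"
      by (rule sum.cong) (auto simp: mon_def True)
    also have "\<dots> = (if i = \<tau> (\<sigma> j) then e (\<sigma> j) else 0) * f j"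
      using sj by (simp add: sum.delta)
    finally show ?thesis using True by (simp add: qmat_mult_def mon_def)
  next
    case False
    then show ?thesis by (auto simp: qmat_mult_def mon_def)
  qed
qed

lemma mon_cong: "(\<And>j. j < n \<Longrightarrow> e j = e' j) \<Longrightarrow> mon n \<tau> e = mon n \<tau> e'"
  by (auto simp: mon_def fun_eq_iff)

lemma qdiag_mon: "qdiag n k = mon n id k"
  by (auto simp: qdiag_def mon_def fun_eq_iff)

lemma perm_mat_mon: "perm_mat n \<sigma> = mon n \<sigma> (\<lambda>_. 1)"
  by (auto simp: perm_mat_def mon_def fun_eq_iff)

lemma qmat_one_mon: "qmat_one n = mon n id (\<lambda>_. 1)"
  by (auto simp: qmat_one_def mon_def fun_eq_iff)

lemma mon_carrier: "mon n \<tau> e \<in> carrier (qmat_monoid n)"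
  by (auto simp: qmat_monoid_def mon_def)

lemma qmat_mult_assoc:
  "qmat_mult n (qmat_mult n A B) C = qmat_mult n A (qmat_mult n B C)"
proof (rule ext, rule ext)
  fix i j
  show "qmat_mult n (qmat_mult n A B) C i j = qmat_mult n A (qmat_mult n B C) i j"
  proof (cases "i < n \<and> j < n")
    case True
    have "(\<Sum>l<n. qmat_mult n A B i l * C l j) = (\<Sum>l<n. \<Sum>m<n. A i m * B m l * C l j)"
      using True by (intro sum.cong) (auto simp: qmat_mult_def sum_distrib_right)
    also have "\<dots> = (\<Sum>m<n. \<Sum>l<n. A i m * (B m l * C l j))"
      by (subst sum.swap) (simp add: mult.assoc)
    also have "\<dots> = (\<Sum>m<n. A i m * qmat_mult n B C m j)"
      using True by (intro sum.cong) (auto simp: qmat_mult_def sum_distrib_left)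
    finally show ?thesis using True by (simp add: qmat_mult_def)
  qed (auto simp: qmat_mult_def)
qed

lemma monoid_qmat: "monoid (qmat_monoid n)"
proof (rule monoidI)
  fix x y assume "x \<in> carrier (qmat_monoid n)" "y \<in> carrier (qmat_monoid n)"
  then show "x \<otimes>\<^bsub>qmat_monoid n\<^esub> y \<in> carrier (qmat_monoid n)"
    by (auto simp: qmat_monoid_def qmat_mult_def)
next
  show "\<one>\<^bsub>qmat_monoid n\<^esub> \<in> carrier (qmat_monoid n)"
    by (auto simp: qmat_monoid_def qmat_one_def)
next
  fix x y z show "x \<otimes>\<^bsub>qmat_monoid n\<^esub> y \<otimes>\<^bsub>qmat_monoid n\<^esub> z = x \<otimes>\<^bsub>qmat_monoid n\<^esub> (y \<otimes>\<^bsub>qmat_monoid n\<^esub> z)"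
    by (simp add: qmat_monoid_def qmat_mult_assoc)
next
  fix x assume x: "x \<in> carrier (qmat_monoid n)"
  show "\<one>\<^bsub>qmat_monoid n\<^esub> \<otimes>\<^bsub>qmat_monoid n\<^esub> x = x"
  proof -
    have "qmat_mult n (qmat_one n) x = x"
    proof (rule ext, rule ext)
      fix i j
      show "qmat_mult n (qmat_one n) x i j = x i j"
      proof (cases "i < n \<and> j < n")
        case True
        have "(\<Sum>l<n. qmat_one n i l * x l j) = (\<Sum>l<n. if l = i then x l j else 0)"
          by (rule sum.cong) (auto simp: qmat_one_def True)
        then show ?thesis using True by (simp add: qmat_mult_def)
      qed (use x in \<open>auto simp: qmat_mult_def qmat_monoid_def\<close>)
    qed
    then show ?thesis by (simp add: qmat_monoid_def)
  qed
  show "x \<otimes>\<^bsub>qmat_monoid n\<^esub> \<one>\<^bsub>qmat_monoid n\<^esub> = x"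
  proof -
    have "qmat_mult n x (qmat_one n) = x"
    proof (rule ext, rule ext)
      fix i j
      show "qmat_mult n x (qmat_one n) i j = x i j"
      proof (cases "i < n \<and> j < n")
        case True
        have "(\<Sum>l<n. x i l * qmat_one n l j) = (\<Sum>l<n. if l = j then x i l else 0)"
          by (rule sum.cong) (auto simp: qmat_one_def True)
        then show ?thesis using True by (simp add: qmat_mult_def)
      qed (use x in \<open>auto simp: qmat_mult_def qmat_monoid_def\<close>)
    qed
    then show ?thesis by (simp add: qmat_monoid_def)
  qed
qed

lemma inv_qmat_eq:
  assumes "U \<in> carrier (qmat_monoid n)" "V \<in> carrier (qmat_monoid n)"
    "qmat_mult n U V = qmat_one n" "qmat_mult n V U = qmat_one n"
  shows "m_inv (qmat_monoid n) U = V"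
proof -
  interpret monoid "qmat_monoid n" by (rule monoid_qmat)
  have "V = m_inv (qmat_monoid n) U"
    by (rule inv_unique') (use assms in \<open>simp_all add: qmat_monoid_def\<close>)
  then show ?thesis by simp
qed

lemma inv_mon:
  assumes "\<tau> permutes {..<n}" "\<And>j. j < n \<Longrightarrow> e j \<noteq> 0"
  shows "m_inv (qmat_monoid n) (mon n \<tau> e) = mon n (inv_into UNIV \<tau>) (\<lambda>j. qinv (e (inv_into UNIV \<tau> j)))"
proof (rule inv_qmat_eq[OF mon_carrier mon_carrier])
  have ti: "inv_into UNIV \<tau> permutes {..<n}" using permutes_inv[OF assms(1)] .
  have inv1: "\<And>x. \<tau> (inv_into UNIV \<tau> x) = x" "\<And>x. inv_into UNIV \<tau> (\<tau> x) = x"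
    using permutes_inverses[OF assms(1)] by auto
  have "qmat_mult n (mon n \<tau> e) (mon n (inv_into UNIV \<tau>) (\<lambda>j. qinv (e (inv_into UNIV \<tau> j))))
     = mon n (\<tau> \<circ> inv_into UNIV \<tau>) (\<lambda>j. e (inv_into UNIV \<tau> j) * qinv (e (inv_into UNIV \<tau> j)))"
    by (rule mon_mult[OF ti])
  also have "\<dots> = mon n id (\<lambda>_. 1)"
  proof -
    have "\<tau> \<circ> inv_into UNIV \<tau> = id" using inv1 by (auto simp: fun_eq_iff)
    moreover have "\<And>j. j < n \<Longrightarrow> e (inv_into UNIV \<tau> j) * qinv (e (inv_into UNIV \<tau> j)) = 1"
      using assms(2) permutes_in_image[OF ti] by (auto intro!: qinv_right)
    ultimately show ?thesis by (auto intro: mon_cong)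
  qed
  finally show "qmat_mult n (mon n \<tau> e) (mon n (inv_into UNIV \<tau>) (\<lambda>j. qinv (e (inv_into UNIV \<tau> j)))) = qmat_one n"
    by (simp add: qmat_one_mon)
  have "qmat_mult n (mon n (inv_into UNIV \<tau>) (\<lambda>j. qinv (e (inv_into UNIV \<tau> j)))) (mon n \<tau> e)
     = mon n (inv_into UNIV \<tau> \<circ> \<tau>) (\<lambda>j. qinv (e (inv_into UNIV \<tau> (\<tau> j))) * e j)"
    by (rule mon_mult[OF assms(1)])
  also have "\<dots> = mon n id (\<lambda>_. 1)"
  proof -
    have "inv_into UNIV \<tau> \<circ> \<tau> = id" using inv1 by (auto simp: fun_eq_iff)
    moreover have "\<And>j. j < n \<Longrightarrow> qinv (e (inv_into UNIV \<tau> (\<tau> j))) * e j = 1"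
      using assms(2) inv1 by (auto intro!: qinv_left)
    ultimately show ?thesis by (auto intro: mon_cong)
  qed
  finally show "qmat_mult n (mon n (inv_into UNIV \<tau>) (\<lambda>j. qinv (e (inv_into UNIV \<tau> j)))) (mon n \<tau> e) = qmat_one n"
    by (simp add: qmat_one_mon)
qed




locale KHsetup =
  fixes K H :: "quat set" and KG :: "quat monoid" and Q :: "quat set monoid"
  assumes KG_def: "KG = quat_units\<lparr>carrier := K\<rparr>"
    and Q_def: "Q = KG Mod H"
    and subK: "subgroup K quat_units" and finK: "finite K"
    and nH: "H \<lhd> KG"
    and cyc: "cyclic_group Q"
begin

definition pi :: "quat \<Rightarrow> quat set" where "pi x = H #>\<^bsub>KG\<^esub> x"

lemma grpKG: "group KG"
  unfolding KG_def by (rule subgroup.subgroup_is_group[OF subK group_quat_units])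

lemma KG_simps [simp]: "carrier KG = K" "monoid.mult KG = (*)" "one KG = 1"
  by (simp_all add: KG_def quat_units_def)

lemma K_nz: "x \<in> K \<Longrightarrow> x \<noteq> 0"
  using subgroup.subset[OF subK] by (auto simp: quat_units_def)

lemma K_mult: "x \<in> K \<Longrightarrow> y \<in> K \<Longrightarrow> x * y \<in> K"
  using subgroup.m_closed[OF subK] by (simp add: quat_units_def)

lemma K_one: "1 \<in> K"
  using subgroup.one_closed[OF subK] by (simp add: quat_units_def)

lemma K_qinv: "x \<in> K \<Longrightarrow> qinv x \<in> K"
  using subgroup.m_inv_closed[OF subK] inv_quat_units K_nz by metis

lemma inv_KG: "x \<in> K \<Longrightarrow> inv\<^bsub>KG\<^esub> x = qinv x"
  using group.m_inv_consistent[OF group_quat_units subK] inv_quat_units K_nz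
  by (simp add: KG_def)

lemma normH: "normal H KG" using nH .

lemma H_sub: "H \<subseteq> K"
  using normal.axioms(1)[OF nH] subgroup.subset by fastforce

lemma grpQ: "group Q" unfolding Q_def by (rule normal.factorgroup_is_group[OF nH])

lemma cQ: "comm_group Q" using group.cyclic_imp_abelian_group[OF grpQ cyc] .

lemma pi_hom: "pi \<in> hom KG Q"
  unfolding Q_def using normal.r_coset_hom_Mod[OF nH] by (simp add: pi_def[abs_def])

lemma ghom: "group_hom KG Q pi"
  by (simp add: group_hom_def group_hom_axioms_def grpKG grpQ pi_hom)

lemma pi_closed: "x \<in> K \<Longrightarrow> pi x \<in> carrier Q"
  using group_hom.hom_closed[OF ghom] by simp

lemma pi_mult: "x \<in> K \<Longrightarrow> y \<in> K \<Longrightarrow> pi (x * y) = pi x \<otimes>\<^bsub>Q\<^esub> pi y"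
  using group_hom.hom_mult[OF ghom] by simp

lemma pi_one: "pi 1 = \<one>\<^bsub>Q\<^esub>"
  using group_hom.hom_one[OF ghom] by simp

lemma pi_qinv: "x \<in> K \<Longrightarrow> pi (qinv x) = inv\<^bsub>Q\<^esub> (pi x)"
  using group_hom.hom_inv[OF ghom] inv_KG by simp

lemma pi_eq_one: "x \<in> K \<Longrightarrow> pi x = \<one>\<^bsub>Q\<^esub> \<longleftrightarrow> x \<in> H"
proof
  assume x: "x \<in> K" and "pi x = \<one>\<^bsub>Q\<^esub>"
  then have "H #>\<^bsub>KG\<^esub> x = H" by (simp add: pi_def Q_def)
  then show "x \<in> H"
    using group.coset_join1[OF grpKG] normal.axioms(1)[OF nH] x by simp
next
  assume x: "x \<in> K" and "x \<in> H"
  then have "H #>\<^bsub>KG\<^esub> x = H"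
    using group.coset_join2[OF grpKG] normal.axioms(1)[OF nH] by simp
  then show "pi x = \<one>\<^bsub>Q\<^esub>" by (simp add: pi_def Q_def)
qed

lemma carrier_Q: "carrier Q = rcosets\<^bsub>KG\<^esub> H"
  by (simp add: Q_def FactGroup_def)

lemma finQ: "finite (carrier Q)"
  unfolding carrier_Q RCOSETS_def using finK by simp

lemma order_Q: "order Q = card (rcosets\<^bsub>KG\<^esub> H)"
  by (simp add: order_def carrier_Q)

end




lemma foldr_mult_acc: "foldr (*) xs (z::quat) = foldr (*) xs 1 * z"
  by (induction xs) (simp_all add: mult.assoc)

lemma qinv_one: "qinv 1 = 1"
  using qinv_left[of 1] by simp

lemma comm_group_finprod_inv:
  assumes "comm_group G" "finite A" "f \<in> A \<rightarrow> carrier G"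
  shows "finprod G (\<lambda>j. inv\<^bsub>G\<^esub> (f j)) A = inv\<^bsub>G\<^esub> (finprod G f A)"
proof -
  interpret comm_group G by (rule assms(1))
  have "finprod G (\<lambda>j. inv\<^bsub>G\<^esub> (f j)) A \<otimes>\<^bsub>G\<^esub> finprod G f A = finprod G (\<lambda>j. inv\<^bsub>G\<^esub> (f j) \<otimes>\<^bsub>G\<^esub> f j) A"
    using assms by (simp add: Pi_def)
  also have "\<dots> = \<one>\<^bsub>G\<^esub>" using assms by (intro finprod_one_eqI) (auto simp: Pi_def)
  finally show ?thesis
    using assms by (intro inv_equality[symmetric]) (auto simp: Pi_def)
qed

lemma comm_group_finprod_perm:
  assumes "comm_group G" "\<sigma> permutes A" "g \<in> A \<rightarrow> carrier G"
  shows "finprod G (\<lambda>j. g (\<sigma> j)) A = finprod G g A"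
proof -
  interpret comm_group G by (rule assms(1))
  have "finprod G g (\<sigma> ` A) = finprod G (\<lambda>j. g (\<sigma> j)) A"
    using assms permutes_image[OF assms(2)] permutes_inj[OF assms(2)]
    by (intro finprod_reindex) (auto simp: inj_on_def inj_def)
  then show ?thesis using permutes_image[OF assms(2)] by simp
qed

context KHsetup
begin

definition MonKH :: "nat \<Rightarrow> qmat set" where
  "MonKH n = {mon n \<tau> e | \<tau> e. \<tau> permutes {..<n} \<and> (\<forall>j<n. e j \<in> K)
                \<and> finprod Q (\<lambda>j. pi (e j)) {..<n} = \<one>\<^bsub>Q\<^esub>}"

lemma pi_foldr:
  assumes "\<forall>i<n. k i \<in> K"
  shows "foldr (*) (map k [0..<n]) 1 \<in> K \<and>
         pi (foldr (*) (map k [0..<n]) 1) = finprod Q (\<lambda>j. pi (k j)) {..<n}"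
  using assms
proof (induction n)
  case 0
  interpret Q: comm_group Q by (rule cQ)
  show ?case by (simp add: K_one pi_one)
next
  case (Suc n)
  interpret Q: comm_group Q by (rule cQ)
  let ?P = "foldr (*) (map k [0..<n]) 1"
  have IH: "?P \<in> K" "pi ?P = finprod Q (\<lambda>j. pi (k j)) {..<n}" using Suc by auto
  have kn: "k n \<in> K" using Suc.prems by simp
  have eq: "foldr (*) (map k [0..<Suc n]) 1 = ?P * k n"
    by (simp only: upt_Suc_append[OF le0] map_append foldr_append) (simp add: foldr_mult_acc[of _ "k n"])
  show ?case
  proof
    show "foldr (*) (map k [0..<Suc n]) 1 \<in> K" using eq IH kn K_mult by simp
    have "pi (?P * k n) = finprod Q (\<lambda>j. pi (k j)) {..<n} \<otimes>\<^bsub>Q\<^esub> pi (k n)"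
      using pi_mult IH kn by simp
    also have "\<dots> = finprod Q (\<lambda>j. pi (k j)) {..<Suc n}"
      using Suc.prems pi_closed by (simp add: lessThan_Suc Pi_def Q.m_comm)
    finally show "pi (foldr (*) (map k [0..<Suc n]) 1) = finprod Q (\<lambda>j. pi (k j)) {..<Suc n}"
      using eq by simp
  qed
qed

end


context KHsetup begin
lemma MonKH_one: "qmat_one n \<in> MonKH n"
  using comm_monoid.finprod_one[OF comm_group.axioms(1)[OF cQ]] unfolding MonKH_def qmat_one_mon
  by (intro CollectI exI[of _ id] exI[of _ "\<lambda>_. 1"]) (auto simp: K_one pi_one)

lemma MonKH_mult:
  assumes "A \<in> MonKH n" "B \<in> MonKH n"
  shows "qmat_mult n A B \<in> MonKH n"
proof -
  interpret Q: comm_group Q by (rule cQ)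
  obtain \<tau> e where A: "A = mon n \<tau> e" "\<tau> permutes {..<n}" "\<forall>j<n. e j \<in> K"
      "finprod Q (\<lambda>j. pi (e j)) {..<n} = \<one>\<^bsub>Q\<^esub>"
    using assms(1) unfolding MonKH_def by auto
  obtain \<sigma> f where B: "B = mon n \<sigma> f" "\<sigma> permutes {..<n}" "\<forall>j<n. f j \<in> K"
      "finprod Q (\<lambda>j. pi (f j)) {..<n} = \<one>\<^bsub>Q\<^esub>"
    using assms(2) unfolding MonKH_def by auto
  have sj: "\<And>j. j < n \<Longrightarrow> \<sigma> j < n" using permutes_in_image[OF B(2)] by auto
  have AB: "qmat_mult n A B = mon n (\<tau> \<circ> \<sigma>) (\<lambda>j. e (\<sigma> j) * f j)"
    using A B mon_mult by simp
  have K1: "\<forall>j<n. e (\<sigma> j) * f j \<in> K" using A B sj K_mult by auto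
  have "finprod Q (\<lambda>j. pi (e (\<sigma> j) * f j)) {..<n}
      = finprod Q (\<lambda>j. pi (e (\<sigma> j)) \<otimes>\<^bsub>Q\<^esub> pi (f j)) {..<n}"
    using A B sj by (intro Q.finprod_cong') (auto simp: pi_mult pi_closed)
  also have "\<dots> = finprod Q (\<lambda>j. pi (e (\<sigma> j))) {..<n} \<otimes>\<^bsub>Q\<^esub> finprod Q (\<lambda>j. pi (f j)) {..<n}"
    using A B sj pi_closed by (intro Q.finprod_multf) (auto simp: Pi_def)
  also have "finprod Q (\<lambda>j. pi (e (\<sigma> j))) {..<n} = finprod Q (\<lambda>j. pi (e j)) {..<n}"
    using comm_group_finprod_perm[OF cQ B(2), of "\<lambda>j. pi (e j)"] A pi_closed by (auto simp: Pi_def)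
  finally have "finprod Q (\<lambda>j. pi (e (\<sigma> j) * f j)) {..<n} = \<one>\<^bsub>Q\<^esub>"
    using A B by simp
  then show ?thesis unfolding MonKH_def AB
    using K1 permutes_compose[OF B(2) A(2)] by blast
qed

lemma MonKH_inv:
  assumes "\<tau> permutes {..<n}" "\<forall>j<n. e j \<in> K" "finprod Q (\<lambda>j. pi (e j)) {..<n} = \<one>\<^bsub>Q\<^esub>"
  shows "m_inv (qmat_monoid n) (mon n \<tau> e) \<in> MonKH n"
proof -
  interpret Q: comm_group Q by (rule cQ)
  let ?t = "inv_into UNIV \<tau>"
  have ti: "?t permutes {..<n}" using permutes_inv[OF assms(1)] .
  have tj: "\<And>j. j < n \<Longrightarrow> ?t j < n" using permutes_in_image[OF ti] by auto
  have eq: "m_inv (qmat_monoid n) (mon n \<tau> e) = mon n ?t (\<lambda>j. qinv (e (?t j)))"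
    using inv_mon[OF assms(1)] assms(2) K_nz by auto
  have K1: "\<forall>j<n. qinv (e (?t j)) \<in> K" using assms(2) tj K_qinv by auto
  have "finprod Q (\<lambda>j. pi (qinv (e (?t j)))) {..<n} = finprod Q (\<lambda>j. inv\<^bsub>Q\<^esub> (pi (e (?t j)))) {..<n}"
    using assms(2) tj by (intro Q.finprod_cong') (auto simp: pi_qinv pi_closed)
  also have "\<dots> = finprod Q (\<lambda>j. inv\<^bsub>Q\<^esub> (pi (e j))) {..<n}"
    using comm_group_finprod_perm[OF cQ ti, of "\<lambda>j. inv\<^bsub>Q\<^esub> (pi (e j))"] assms(2) pi_closed
    by (auto simp: Pi_def)
  also have "\<dots> = inv\<^bsub>Q\<^esub> (finprod Q (\<lambda>j. pi (e j)) {..<n})"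
    using comm_group_finprod_inv[OF cQ, of "{..<n}" "\<lambda>j. pi (e j)"] assms(2) pi_closed by (simp add: Pi_def)
  also have "\<dots> = \<one>\<^bsub>Q\<^esub>" using assms(3) by simp
  finally show ?thesis unfolding eq MonKH_def using ti K1 by blast
qed

end


context KHsetup begin
lemma G_sub: "G_n n K H \<subseteq> MonKH n"
proof
  fix x assume "x \<in> G_n n K H"
  then show "x \<in> MonKH n" unfolding G_n_def
  proof (induction rule: generate.induct)
    case one
    then show ?case using MonKH_one by (simp add: qmat_monoid_def)
  next
    case (incl h)
    then show ?case
    proof
      assume "h \<in> A_n n K H"
      then obtain k where k: "h = qdiag n k" "\<forall>i<n. k i \<in> K" "foldr (*) (map k [0..<n]) 1 \<in> H"
        unfolding A_n_def by auto
      have "finprod Q (\<lambda>j. pi (k j)) {..<n} = \<one>\<^bsub>Q\<^esub>"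
        using pi_foldr[OF k(2)] pi_eq_one k(3) by auto
      then show ?thesis unfolding MonKH_def k(1) qdiag_mon using k(2)
        by (intro CollectI exI[of _ id] exI[of _ k]) simp
    next
      assume "h \<in> {perm_mat n \<sigma> |\<sigma>. \<sigma> permutes {0..<n}}"
      then obtain \<sigma> where s: "h = perm_mat n \<sigma>" "\<sigma> permutes {..<n}" by (auto simp: atLeast0LessThan)
      show ?thesis unfolding MonKH_def s(1) perm_mat_mon using s(2)
        using comm_monoid.finprod_one[OF comm_group.axioms(1)[OF cQ]]
        by (intro CollectI exI[of _ \<sigma>] exI[of _ "\<lambda>_. 1"]) (simp add: K_one pi_one)
    qed
  next
    case (inv h)
    then show ?case
    proof
      assume "h \<in> A_n n K H"
      then obtain k where k: "h = qdiag n k" "\<forall>i<n. k i \<in> K" "foldr (*) (map k [0..<n]) 1 \<in> H"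
        unfolding A_n_def by auto
      have "finprod Q (\<lambda>j. pi (k j)) {..<n} = \<one>\<^bsub>Q\<^esub>"
        using pi_foldr[OF k(2)] pi_eq_one k(3) by auto
      then show ?thesis unfolding k(1) qdiag_mon using MonKH_inv[of id n k] k(2) by simp
    next
      assume "h \<in> {perm_mat n \<sigma> |\<sigma>. \<sigma> permutes {0..<n}}"
      then obtain \<sigma> where s: "h = perm_mat n \<sigma>" "\<sigma> permutes {..<n}" by (auto simp: atLeast0LessThan)
      have "finprod Q (\<lambda>j. pi 1) {..<n} = \<one>\<^bsub>Q\<^esub>"
        using comm_monoid.finprod_one[OF comm_group.axioms(1)[OF cQ]] by (simp add: pi_one)
      then show ?thesis unfolding s(1) perm_mat_mon using MonKH_inv[OF s(2), of "\<lambda>_. 1"]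
        by (simp add: K_one)
    qed
  next
    case (eng h1 h2)
    then show ?case using MonKH_mult by (simp add: qmat_monoid_def)
  qed
qed

end




definition dv :: "quat \<Rightarrow> nat \<Rightarrow> quat" where "dv a j = (if j = 0 then a else 1)"
definition dvi :: "quat \<Rightarrow> nat \<Rightarrow> quat" where "dvi a j = (if j = 0 then qinv a else 1)"

lemma dv_dvi: "a \<noteq> 0 \<Longrightarrow> dv a j * dvi a j = 1"
  by (simp add: dv_def dvi_def qinv_right)

lemma dvi_dv: "a \<noteq> 0 \<Longrightarrow> dvi a j * dv a j = 1"
  by (simp add: dv_def dvi_def qinv_left)

lemma dv_nz: "a \<noteq> 0 \<Longrightarrow> dv a j \<noteq> 0"
  by (simp add: dv_def)

lemma dvi_nz: "a \<noteq> 0 \<Longrightarrow> dvi a j \<noteq> 0"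
  by (simp add: dvi_def qinv_nz)

lemma D_mat_mon: "D_mat n a = mon n id (dv a)"
  by (simp add: D_mat_def qdiag_mon dv_def[abs_def])

lemma D_mat_inv_mon: "a \<noteq> 0 \<Longrightarrow> D_mat n (inv\<^bsub>quat_units\<^esub> a) = mon n id (dvi a)"
  by (simp add: D_mat_def qdiag_mon dvi_def[abs_def] inv_quat_units)

lemma Pelem:
  assumes "\<sigma> permutes {..<n}" "a \<noteq> 0"
  shows "qmat_mult n (qmat_mult n (D_mat n a) (perm_mat n \<sigma>)) (D_mat n (inv\<^bsub>quat_units\<^esub> a))
         = mon n \<sigma> (\<lambda>j. dv a (\<sigma> j) * dvi a j)"
  unfolding D_mat_inv_mon[OF assms(2)] unfolding D_mat_mon perm_mat_mon using assms by (simp add: mon_mult)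

lemma psum_mono: "i \<le> i' \<Longrightarrow> psum lam i \<le> psum lam i'"
proof -
  assume "i \<le> i'"
  then obtain t where "i' = i + t" using le_Suc_ex by blast
  then show ?thesis by (simp add: psum_def take_add)
qed

lemma psum_Suc: "i < length lam \<Longrightarrow> psum lam (Suc i) = psum lam i + lam ! i"
  by (simp add: psum_def take_Suc_conv_app_nth)

lemma psum_length: "psum lam (length lam) = sum_list lam"
  by (simp add: psum_def)

lemma block_sub: "i \<le> length lam \<Longrightarrow> block lam i \<subseteq> {..<sum_list lam}"
  using psum_mono[of i "length lam" lam] by (auto simp: block_def psum_length)

definition Pset :: "nat \<Rightarrow> quat \<Rightarrow> qmat set" where
  "Pset n a = {mon n \<sigma> (\<lambda>j. dv a (\<sigma> j) * dvi a j) | \<sigma>. \<sigma> permutes {..<n}}"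

lemma Pset_one: "a \<noteq> 0 \<Longrightarrow> qmat_one n \<in> Pset n a"
  unfolding Pset_def qmat_one_mon
  by (intro CollectI exI[of _ id]) (simp add: dv_dvi)

lemma Pset_mult:
  assumes "a \<noteq> 0" "U \<in> Pset n a" "V \<in> Pset n a"
  shows "qmat_mult n U V \<in> Pset n a"
proof -
  obtain \<sigma> where s: "U = mon n \<sigma> (\<lambda>j. dv a (\<sigma> j) * dvi a j)" "\<sigma> permutes {..<n}"
    using assms(2) unfolding Pset_def by auto
  obtain \<rho> where r: "V = mon n \<rho> (\<lambda>j. dv a (\<rho> j) * dvi a j)" "\<rho> permutes {..<n}"
    using assms(3) unfolding Pset_def by auto
  have "qmat_mult n U V = mon n (\<sigma> \<circ> \<rho>) (\<lambda>j. (dv a (\<sigma> (\<rho> j)) * dvi a (\<rho> j)) * (dv a (\<rho> j) * dvi a j))"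
    using s r by (simp add: mon_mult)
  also have "\<dots> = mon n (\<sigma> \<circ> \<rho>) (\<lambda>j. dv a ((\<sigma> \<circ> \<rho>) j) * dvi a j)"
  proof -
    have "\<And>j. (dv a (\<sigma> (\<rho> j)) * dvi a (\<rho> j)) * (dv a (\<rho> j) * dvi a j) = dv a (\<sigma> (\<rho> j)) * dvi a j"
      using dvi_dv[OF assms(1)] by (simp add: mult.assoc[symmetric]) (simp add: mult.assoc)
    then show ?thesis by simp
  qed
  finally show ?thesis unfolding Pset_def using permutes_compose[OF r(2) s(2)] by blast
qed

lemma set_prod_Pset:
  assumes "a \<noteq> 0" "\<forall>S\<in>set Ss. S \<subseteq> Pset n a"
  shows "set_prod_list n Ss \<subseteq> Pset n a"
  using assms(2)
proof (induction Ss)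
  case Nil
  then show ?case using Pset_one[OF assms(1)] by simp
next
  case (Cons S Ss)
  show ?case
  proof
    fix x assume "x \<in> set_prod_list n (S # Ss)"
    then obtain A B where "x = qmat_mult n A B" "A \<in> S" "B \<in> set_prod_list n Ss" by auto
    moreover have "A \<in> Pset n a" "B \<in> Pset n a" using Cons \<open>A \<in> S\<close> \<open>B \<in> set_prod_list n Ss\<close> by auto
    ultimately show "x \<in> Pset n a" using Pset_mult[OF assms(1)] by simp
  qed
qed

lemma mon_one_left: "\<sigma> permutes {..<n} \<Longrightarrow> qmat_mult n (qmat_one n) (mon n \<sigma> w) = mon n \<sigma> w"
  by (simp add: qmat_one_mon mon_mult)

lemma mon_one_right: "qmat_mult n (mon n \<sigma> w) (qmat_one n) = mon n \<sigma> w"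
  by (simp add: qmat_one_mon mon_mult)

lemma one_in_set_prod: "\<forall>S\<in>set Ss. qmat_one n \<in> S \<Longrightarrow> qmat_one n \<in> set_prod_list n Ss"
proof (induction Ss)
  case (Cons S Ss)
  then have "qmat_mult n (qmat_one n) (qmat_one n) \<in> set_prod_list n (S # Ss)" by auto
  then show ?case by (simp add: qmat_one_mon mon_mult)
qed simp

lemma mem_set_prod:
  assumes "\<forall>S\<in>set Ss. qmat_one n \<in> S" "S0 \<in> set Ss" "mon n \<sigma> w \<in> S0" "\<sigma> permutes {..<n}"
  shows "mon n \<sigma> w \<in> set_prod_list n Ss"
  using assms(1,2)
proof (induction Ss)
  case (Cons S Ss)
  show ?case
  proof (cases "S0 = S")
    case True
    have "qmat_one n \<in> set_prod_list n Ss" using one_in_set_prod Cons.prems by simp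
    then have "qmat_mult n (mon n \<sigma> w) (qmat_one n) \<in> set_prod_list n (S # Ss)"
      using True assms(3) by auto
    then show ?thesis by (simp add: mon_one_right)
  next
    case False
    then have "mon n \<sigma> w \<in> set_prod_list n Ss" using Cons by auto
    then have "qmat_mult n (qmat_one n) (mon n \<sigma> w) \<in> set_prod_list n (S # Ss)"
      using Cons.prems by auto
    then show ?thesis by (simp add: mon_one_left[OF assms(4)])
  qed
qed simp

lemma P_block_eq:
  assumes "a \<noteq> 0" "i \<le> length lam" "sum_list lam = n"
  shows "P_block n lam a i = {mon n \<sigma> (\<lambda>j. dv a (\<sigma> j) * dvi a j) | \<sigma>. \<sigma> permutes block lam i}"
proof -
  have "\<And>\<sigma>. \<sigma> permutes block lam i \<Longrightarrow> \<sigma> permutes {..<n}"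
    using block_sub[OF assms(2)] assms(3) permutes_subset by blast
  then show ?thesis unfolding P_block_def using Pelem[OF _ assms(1)] by metis
qed

lemma P_lam_sub_Pset:
  assumes "a \<noteq> 0" "sum_list lam = n"
  shows "P_lam n lam a \<subseteq> Pset n a"
  unfolding P_lam_def
proof (rule set_prod_Pset[OF assms(1)])
  show "\<forall>S\<in>set (map (P_block n lam a) [1..<Suc (length lam)]). S \<subseteq> Pset n a"
  proof
    fix S assume "S \<in> set (map (P_block n lam a) [1..<Suc (length lam)])"
    then obtain i where "i \<in> set [1..<Suc (length lam)]" "S = P_block n lam a i" by auto
    then have i: "i \<le> length lam" "S = P_block n lam a i" by auto
    have "\<And>\<sigma>. \<sigma> permutes block lam i \<Longrightarrow> \<sigma> permutes {..<n}"
      using block_sub[OF i(1)] assms(2) permutes_subset by blast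
    then show "S \<subseteq> Pset n a" unfolding i(2) P_block_eq[OF assms(1) i(1) assms(2)] Pset_def by blast
  qed
qed

lemma P_lam_mem:
  assumes "a \<noteq> 0" "sum_list lam = n" "1 \<le> i" "i \<le> length lam" "\<sigma> permutes block lam i"
  shows "mon n \<sigma> (\<lambda>j. dv a (\<sigma> j) * dvi a j) \<in> P_lam n lam a"
  unfolding P_lam_def
proof (rule mem_set_prod)
  show "\<forall>S\<in>set (map (P_block n lam a) [1..<Suc (length lam)]). qmat_one n \<in> S"
  proof
    fix S assume "S \<in> set (map (P_block n lam a) [1..<Suc (length lam)])"
    then obtain i' where "i' \<in> set [1..<Suc (length lam)]" "S = P_block n lam a i'" by auto
    then have i: "i' \<le> length lam" "S = P_block n lam a i'" by auto
    have "qmat_one n = mon n id (\<lambda>j. dv a (id j) * dvi a j)"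
      by (simp add: qmat_one_mon dv_dvi[OF assms(1)])
    then show "qmat_one n \<in> S" unfolding i(2) P_block_eq[OF assms(1) i(1) assms(2)]
      by (intro CollectI exI[of _ id]) simp
  qed
  show "P_block n lam a i \<in> set (map (P_block n lam a) [1..<Suc (length lam)])"
    unfolding set_map by (rule imageI) (use assms(3,4) in auto)
  show "mon n \<sigma> (\<lambda>j. dv a (\<sigma> j) * dvi a j) \<in> P_block n lam a i"
    unfolding P_block_eq[OF assms(1) assms(4) assms(2)] using assms(5) by blast
  show "\<sigma> permutes {..<n}"
    using block_sub[OF assms(4)] assms(2,5) permutes_subset by blast
qed




lemma quat_alg:
  fixes E P P' A R S' Pa R' :: quat
  assumes "E * (P * P') * qinv A = R * S'" "P' * Pa = 1" "A \<noteq> 0" "R' * R = 1"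
  shows "R' * E * P = S' * A * Pa"
proof -
  have 1: "qinv A * (A * Pa) = Pa" using qinv_left[OF assms(3)] by (simp add: mult.assoc[symmetric])
  have 2: "R' * (R * Z) = Z" for Z using assms(4) by (simp add: mult.assoc[symmetric])
  have "R' * E * P = R' * E * P * (P' * Pa)" using assms(2) by simp
  also have "\<dots> = R' * (E * (P * P') * qinv A) * (A * Pa)" by (simp add: mult.assoc 1)
  also have "\<dots> = R' * (R * S') * (A * Pa)" using assms(1) by simp
  also have "\<dots> = S' * A * Pa" by (simp add: mult.assoc 2)
  finally show ?thesis .
qed

lemma dvi_eq: "dvi a = dv (qinv a)"
  by (simp add: dvi_def dv_def fun_eq_iff)

context KHsetup
begin

lemma dv_K: "a \<in> K \<Longrightarrow> dv a j \<in> K"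
  by (simp add: dv_def K_one)

lemma dvi_K: "a \<in> K \<Longrightarrow> dvi a j \<in> K"
  by (simp add: dvi_eq dv_K K_qinv)

lemma finprod_dv:
  assumes "a \<in> K" "0 < n"
  shows "finprod Q (\<lambda>j. pi (dv a j)) {..<n} = pi a"
proof -
  interpret Q: comm_group Q by (rule cQ)
  have eq: "{..<n} = insert 0 {1..<n}" using assms(2) by auto
  have "finprod Q (\<lambda>j. pi (dv a j)) {1..<n} = \<one>\<^bsub>Q\<^esub>"
    by (intro Q.finprod_one_eqI) (simp add: dv_def pi_one)
  then show ?thesis unfolding eq using assms pi_closed dv_K
    by (subst Q.finprod_insert) (auto simp: Pi_def dv_def K_one)
qed

lemma forward_mat:
  assumes part: "sum_list lam = n" and n0: "0 < n" and \<alpha>: "\<alpha> \<in> K" and \<beta>: "\<beta> \<in> K"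
    and g: "g \<in> G_n n K H"
    and cj: "(\<lambda>A. qmat_mult n (qmat_mult n g A) (inv\<^bsub>qmat_monoid n\<^esub> g)) ` P_lam n lam \<alpha> = P_lam n lam \<beta>"
  shows "\<exists>f. (\<forall>j<n. f j \<in> K) \<and>
             (\<forall>i. 1 \<le> i \<and> i \<le> length lam \<longrightarrow> (\<forall>a\<in>block lam i. \<forall>b\<in>block lam i. f a = f b)) \<and>
             finprod Q (\<lambda>j. pi (f j)) {..<n} = pi (\<alpha> * qinv \<beta>)"
proof -
  interpret Q: comm_group Q by (rule cQ)
  obtain \<tau> e where ge: "g = mon n \<tau> e" "\<tau> permutes {..<n}" "\<forall>j<n. e j \<in> K"
      "finprod Q (\<lambda>j. pi (e j)) {..<n} = \<one>\<^bsub>Q\<^esub>"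
    using G_sub g unfolding MonKH_def by blast
  have \<alpha>0: "\<alpha> \<noteq> 0" and \<beta>0: "\<beta> \<noteq> 0" using \<alpha> \<beta> K_nz by auto
  have tn: "\<And>j. j < n \<Longrightarrow> \<tau> j < n" using permutes_in_image[OF ge(2)] by auto
  let ?t = "inv_into UNIV \<tau>"
  have tinv: "\<And>x. ?t (\<tau> x) = x" using permutes_inverses[OF ge(2)] by auto
  have ginv: "inv\<^bsub>qmat_monoid n\<^esub> g = mon n ?t (\<lambda>j. qinv (e (?t j)))"
    using inv_mon[OF ge(2)] ge(3) K_nz ge(1) by auto
  define f where "f j = dvi \<beta> (\<tau> j) * e j * dv \<alpha> j" for j
  have fK: "\<forall>j<n. f j \<in> K"
    using ge(3) tn dvi_K[OF \<beta>] dv_K[OF \<alpha>] K_mult by (simp add: f_def)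
  have blocks: "\<forall>a\<in>block lam i. \<forall>b\<in>block lam i. f a = f b" if i: "1 \<le> i" "i \<le> length lam" for i
  proof (intro ballI)
    fix a b assume a: "a \<in> block lam i" and b: "b \<in> block lam i"
    have an: "a < n" and bn: "b < n" using a b block_sub[OF i(2)] part by auto
    show "f a = f b"
    proof (cases "a = b")
      case False
      let ?s = "Transposition.transpose a b"
      have sp: "?s permutes block lam i" using permutes_swap_id[OF a b] .
      have spn: "?s permutes {..<n}" using sp block_sub[OF i(2)] part permutes_subset by blast
      let ?M = "mon n ?s (\<lambda>j. dv \<alpha> (?s j) * dvi \<alpha> j)"
      have "?M \<in> P_lam n lam \<alpha>" using P_lam_mem[OF \<alpha>0 part i sp] .
      then have "qmat_mult n (qmat_mult n g ?M) (inv\<^bsub>qmat_monoid n\<^esub> g) \<in> Pset n \<beta>"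
        using cj P_lam_sub_Pset[OF \<beta>0 part] by blast
      then obtain \<sigma> where s: "qmat_mult n (qmat_mult n g ?M) (inv\<^bsub>qmat_monoid n\<^esub> g)
          = mon n \<sigma> (\<lambda>j. dv \<beta> (\<sigma> j) * dvi \<beta> j)" "\<sigma> permutes {..<n}"
        unfolding Pset_def by blast
      have "qmat_mult n (qmat_mult n g ?M) (inv\<^bsub>qmat_monoid n\<^esub> g)
          = mon n (\<tau> \<circ> ?s \<circ> ?t) (\<lambda>j. (e (?s (?t j)) * (dv \<alpha> (?s (?t j)) * dvi \<alpha> (?t j))) * qinv (e (?t j)))"
        unfolding ginv unfolding ge(1) using spn permutes_inv[OF ge(2)] by (simp add: mon_mult)
      then have EQ: "mon n (\<tau> \<circ> ?s \<circ> ?t) (\<lambda>j. (e (?s (?t j)) * (dv \<alpha> (?s (?t j)) * dvi \<alpha> (?t j))) * qinv (e (?t j)))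
          = mon n \<sigma> (\<lambda>j. dv \<beta> (\<sigma> j) * dvi \<beta> j)" using s(1) by simp
      have ta: "\<tau> a < n" using tn an by simp
      have sta: "\<sigma> (\<tau> a) < n" using permutes_in_image[OF s(2)] ta by auto
      have nz: "dv \<beta> (\<sigma> (\<tau> a)) * dvi \<beta> (\<tau> a) \<noteq> 0"
        using quat_mult_nz dv_nz dvi_nz \<beta>0 by blast
      have "mon n (\<tau> \<circ> ?s \<circ> ?t) (\<lambda>j. (e (?s (?t j)) * (dv \<alpha> (?s (?t j)) * dvi \<alpha> (?t j))) * qinv (e (?t j))) (\<sigma> (\<tau> a)) (\<tau> a)
          = dv \<beta> (\<sigma> (\<tau> a)) * dvi \<beta> (\<tau> a)"
        using EQ ta sta by (simp add: mon_def)
      then have 1: "\<sigma> (\<tau> a) = \<tau> b" and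
        2: "(e b * (dv \<alpha> b * dvi \<alpha> a)) * qinv (e a) = dv \<beta> (\<sigma> (\<tau> a)) * dvi \<beta> (\<tau> a)"
        using nz by (auto simp: mon_def tinv split: if_splits)
      have "dvi \<beta> (\<tau> b) * e b * dv \<alpha> b = dvi \<beta> (\<tau> a) * e a * dv \<alpha> a"
        by (rule quat_alg[OF 2[unfolded 1]]) (use dvi_dv \<alpha>0 \<beta>0 K_nz ge(3) an in auto)
      then show ?thesis by (simp add: f_def)
    qed simp
  qed
  have "finprod Q (\<lambda>j. pi (f j)) {..<n}
      = finprod Q (\<lambda>j. (pi (dvi \<beta> (\<tau> j)) \<otimes>\<^bsub>Q\<^esub> pi (e j)) \<otimes>\<^bsub>Q\<^esub> pi (dv \<alpha> j)) {..<n}"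
    using ge(3) tn dvi_K[OF \<beta>] dv_K[OF \<alpha>] K_mult
    by (intro Q.finprod_cong') (auto simp: f_def pi_mult pi_closed)
  also have "\<dots> = (finprod Q (\<lambda>j. pi (dvi \<beta> (\<tau> j))) {..<n} \<otimes>\<^bsub>Q\<^esub> finprod Q (\<lambda>j. pi (e j)) {..<n})
        \<otimes>\<^bsub>Q\<^esub> finprod Q (\<lambda>j. pi (dv \<alpha> j)) {..<n}"
    using ge(3) tn dvi_K[OF \<beta>] dv_K[OF \<alpha>] by (simp add: Pi_def pi_closed)
  also have "finprod Q (\<lambda>j. pi (dvi \<beta> (\<tau> j))) {..<n} = finprod Q (\<lambda>j. pi (dvi \<beta> j)) {..<n}"
    using comm_group_finprod_perm[OF cQ ge(2), of "\<lambda>j. pi (dvi \<beta> j)"] dvi_K[OF \<beta>] pi_closed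
    by (auto simp: Pi_def)
  also have "\<dots> = pi (qinv \<beta>)" unfolding dvi_eq using finprod_dv[OF K_qinv[OF \<beta>] n0] .
  also have "finprod Q (\<lambda>j. pi (dv \<alpha> j)) {..<n} = pi \<alpha>" using finprod_dv[OF \<alpha> n0] .
  also have "(pi (qinv \<beta>) \<otimes>\<^bsub>Q\<^esub> finprod Q (\<lambda>j. pi (e j)) {..<n}) \<otimes>\<^bsub>Q\<^esub> pi \<alpha> = pi (\<alpha> * qinv \<beta>)"
    using ge(4) \<alpha> \<beta> K_qinv pi_closed by (simp add: pi_mult Q.m_comm)
  finally show ?thesis using fK blocks by blast
qed

end



lemma cancel_l: "(x::quat) * y = 1 \<Longrightarrow> x * (y * z) = z"
  by (simp add: mult.assoc[symmetric])

definition MonP :: "nat \<Rightarrow> qmat set" where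
  "MonP n = {mon n \<sigma> w | \<sigma> w. \<sigma> permutes {..<n}}"

lemma MonP_mult: "U \<in> MonP n \<Longrightarrow> V \<in> MonP n \<Longrightarrow> qmat_mult n U V \<in> MonP n"
proof -
  assume "U \<in> MonP n" "V \<in> MonP n"
  then obtain \<sigma> w \<rho> w' where U: "U = mon n \<sigma> w" "\<sigma> permutes {..<n}"
    and V: "V = mon n \<rho> w'" "\<rho> permutes {..<n}" unfolding MonP_def by auto
  show ?thesis unfolding MonP_def U V mon_mult[OF V(2)]
    using permutes_compose[OF V(2) U(2)] by blast
qed

lemma MonP_one: "qmat_one n \<in> MonP n"
  unfolding MonP_def qmat_one_mon by auto

lemma set_prod_MonP: "\<forall>S\<in>set Ss. S \<subseteq> MonP n \<Longrightarrow> set_prod_list n Ss \<subseteq> MonP n"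
proof (induction Ss)
  case Nil then show ?case using MonP_one by simp
next
  case (Cons S Ss)
  show ?case
  proof
    fix x assume "x \<in> set_prod_list n (S # Ss)"
    then obtain A B where "x = qmat_mult n A B" "A \<in> S" "B \<in> set_prod_list n Ss" by auto
    moreover have "A \<in> MonP n" "B \<in> MonP n" using Cons \<open>A \<in> S\<close> \<open>B \<in> set_prod_list n Ss\<close> by auto
    ultimately show "x \<in> MonP n" using MonP_mult by simp
  qed
qed

lemma cj_mon:
  "\<pi> permutes {..<n} \<Longrightarrow> qmat_mult n (qmat_mult n (mon n id \<gamma>) (mon n \<pi> v)) (mon n id \<gamma>')
     = mon n \<pi> (\<lambda>j. \<gamma> (\<pi> j) * v j * \<gamma>' j)"
  by (simp add: mon_mult)

lemma cj_mult:
  assumes "\<And>j. j < n \<Longrightarrow> \<gamma>' j * \<gamma> j = 1" "U \<in> MonP n" "V \<in> MonP n"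
  shows "qmat_mult n (qmat_mult n (mon n id \<gamma>) (qmat_mult n U V)) (mon n id \<gamma>')
    = qmat_mult n (qmat_mult n (qmat_mult n (mon n id \<gamma>) U) (mon n id \<gamma>'))
                  (qmat_mult n (qmat_mult n (mon n id \<gamma>) V) (mon n id \<gamma>'))"
proof -
  obtain \<sigma> w where U: "U = mon n \<sigma> w" "\<sigma> permutes {..<n}" using assms(2) unfolding MonP_def by auto
  obtain \<rho> w' where V: "V = mon n \<rho> w'" "\<rho> permutes {..<n}" using assms(3) unfolding MonP_def by auto
  have rn: "\<And>j. j < n \<Longrightarrow> \<rho> j < n" using permutes_in_image[OF V(2)] by auto
  show ?thesis
    unfolding U V using U(2) V(2) permutes_compose[OF V(2) U(2)]
    apply (simp add: mon_mult cj_mon)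
    apply (rule mon_cong)
    apply (simp add: mult.assoc cancel_l[OF assms(1)] rn)
    done
qed

lemma cj_set_prod:
  assumes "\<And>j. j < n \<Longrightarrow> \<gamma>' j * \<gamma> j = 1" "\<And>j. j < n \<Longrightarrow> \<gamma> j * \<gamma>' j = 1"
    "\<forall>S\<in>set Ss. S \<subseteq> MonP n"
  shows "(\<lambda>A. qmat_mult n (qmat_mult n (mon n id \<gamma>) A) (mon n id \<gamma>')) ` set_prod_list n Ss
       = set_prod_list n (map (\<lambda>S. (\<lambda>A. qmat_mult n (qmat_mult n (mon n id \<gamma>) A) (mon n id \<gamma>')) ` S) Ss)"
  using assms(3)
proof (induction Ss)
  case Nil
  have "qmat_mult n (qmat_mult n (mon n id \<gamma>) (qmat_one n)) (mon n id \<gamma>') = qmat_one n"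
    unfolding qmat_one_mon by (simp add: mon_mult) (rule mon_cong, simp add: assms(2))
  then show ?case by (simp only: set_prod_list.simps list.map image_insert image_empty)
next
  case (Cons S Ss)
  let ?c = "\<lambda>A. qmat_mult n (qmat_mult n (mon n id \<gamma>) A) (mon n id \<gamma>')"
  have SM: "S \<subseteq> MonP n" and PM: "set_prod_list n Ss \<subseteq> MonP n"
    using Cons.prems set_prod_MonP[of Ss n] by auto
  have IH: "?c ` set_prod_list n Ss = set_prod_list n (map (\<lambda>S. ?c ` S) Ss)"
    by (rule Cons.IH) (use Cons.prems in simp)
  have "?c ` set_prod_list n (S # Ss) = {qmat_mult n (?c A) (?c B) | A B. A \<in> S \<and> B \<in> set_prod_list n Ss}"
  proof -
    have "\<And>A B. A \<in> S \<Longrightarrow> B \<in> set_prod_list n Ss \<Longrightarrow> ?c (qmat_mult n A B) = qmat_mult n (?c A) (?c B)"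
      using cj_mult[where n=n and \<gamma>=\<gamma> and \<gamma>'=\<gamma>', OF assms(1)] SM PM by blast
    note eq = this
    show ?thesis
    proof
      show "?c ` set_prod_list n (S # Ss) \<subseteq> {qmat_mult n (?c A) (?c B) | A B. A \<in> S \<and> B \<in> set_prod_list n Ss}"
      proof
        fix x assume "x \<in> ?c ` set_prod_list n (S # Ss)"
        then obtain A B where "x = ?c (qmat_mult n A B)" "A \<in> S" "B \<in> set_prod_list n Ss" by auto
        then show "x \<in> {qmat_mult n (?c A) (?c B) | A B. A \<in> S \<and> B \<in> set_prod_list n Ss}"
          using eq by blast
      qed
      show "{qmat_mult n (?c A) (?c B) | A B. A \<in> S \<and> B \<in> set_prod_list n Ss} \<subseteq> ?c ` set_prod_list n (S # Ss)"
      proof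
        fix x assume "x \<in> {qmat_mult n (?c A) (?c B) | A B. A \<in> S \<and> B \<in> set_prod_list n Ss}"
        then obtain A B where AB: "x = qmat_mult n (?c A) (?c B)" "A \<in> S" "B \<in> set_prod_list n Ss" by auto
        then have "x = ?c (qmat_mult n A B)" using eq by simp
        moreover have "qmat_mult n A B \<in> set_prod_list n (S # Ss)" using AB by auto
        ultimately show "x \<in> ?c ` set_prod_list n (S # Ss)" by blast
      qed
    qed
  qed
  also have "\<dots> = {qmat_mult n A' B' | A' B'. A' \<in> ?c ` S \<and> B' \<in> ?c ` set_prod_list n Ss}"
    by blast
  also have "\<dots> = set_prod_list n (map (\<lambda>S. ?c ` S) (S # Ss))" using IH by simp
  finally show ?case .
qed

context KHsetup
begin

lemma backward_mat:
  assumes part: "sum_list lam = n" and \<alpha>: "\<alpha> \<in> K" and \<beta>: "\<beta> \<in> K"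
    and rK: "\<forall>j<n. r j \<in> K"
    and rb: "\<forall>i. 1 \<le> i \<and> i \<le> length lam \<longrightarrow> (\<forall>a\<in>block lam i. \<forall>b\<in>block lam i. r a = r b)"
    and rp: "finprod Q (\<lambda>j. pi (r j)) {..<n} = pi (\<alpha> * qinv \<beta>)"
  shows "conj_in n (G_n n K H) (P_lam n lam \<alpha>) (P_lam n lam \<beta>)"
proof -
  interpret Q: comm_group Q by (rule cQ)
  have \<alpha>0: "\<alpha> \<noteq> 0" and \<beta>0: "\<beta> \<noteq> 0" using \<alpha> \<beta> K_nz by auto
  have r0: "\<And>j. j < n \<Longrightarrow> r j \<noteq> 0" using rK K_nz by auto
  define \<gamma> where "\<gamma> j = dv \<beta> j * r j * dvi \<alpha> j" for j
  define \<gamma>' where "\<gamma>' j = dv \<alpha> j * qinv (r j) * dvi \<beta> j" for j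
  have g1: "\<gamma>' j * \<gamma> j = 1" if "j < n" for j
    unfolding \<gamma>_def \<gamma>'_def using r0[OF that] \<alpha>0 \<beta>0
    by (simp add: mult.assoc cancel_l[OF dvi_dv] cancel_l[OF qinv_left] dv_dvi)
  have g2: "\<gamma> j * \<gamma>' j = 1" if "j < n" for j
    unfolding \<gamma>_def \<gamma>'_def using r0[OF that] \<alpha>0 \<beta>0
    by (simp add: mult.assoc cancel_l[OF dvi_dv] cancel_l[OF qinv_right] dv_dvi)
  have \<gamma>K: "\<forall>j<n. \<gamma> j \<in> K"
    using rK dvi_K[OF \<alpha>] dv_K[OF \<beta>] K_mult by (simp add: \<gamma>_def)
  have "finprod Q (\<lambda>j. pi (\<gamma> j)) {..<n}
      = finprod Q (\<lambda>j. (pi (dv \<beta> j) \<otimes>\<^bsub>Q\<^esub> pi (r j)) \<otimes>\<^bsub>Q\<^esub> pi (dvi \<alpha> j)) {..<n}"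
    using rK dvi_K[OF \<alpha>] dv_K[OF \<beta>] K_mult
    by (intro Q.finprod_cong') (auto simp: \<gamma>_def pi_mult pi_closed)
  also have "\<dots> = (finprod Q (\<lambda>j. pi (dv \<beta> j)) {..<n} \<otimes>\<^bsub>Q\<^esub> finprod Q (\<lambda>j. pi (r j)) {..<n})
        \<otimes>\<^bsub>Q\<^esub> finprod Q (\<lambda>j. pi (dvi \<alpha> j)) {..<n}"
    using rK dvi_K[OF \<alpha>] dv_K[OF \<beta>] by (simp add: Pi_def pi_closed)
  also have "\<dots> = \<one>\<^bsub>Q\<^esub>"
  proof (cases "n = 0")
    case True then show ?thesis by simp
  next
    case False
    then have n0: "0 < n" by simp
    have "finprod Q (\<lambda>j. pi (dv \<beta> j)) {..<n} = pi \<beta>" using finprod_dv[OF \<beta> n0] .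
    moreover have "finprod Q (\<lambda>j. pi (dvi \<alpha> j)) {..<n} = pi (qinv \<alpha>)"
      unfolding dvi_eq using finprod_dv[OF K_qinv[OF \<alpha>] n0] .
    moreover have "(pi \<beta> \<otimes>\<^bsub>Q\<^esub> pi (\<alpha> * qinv \<beta>)) \<otimes>\<^bsub>Q\<^esub> pi (qinv \<alpha>) = \<one>\<^bsub>Q\<^esub>"
    proof -
      have "(pi \<beta> \<otimes>\<^bsub>Q\<^esub> pi (\<alpha> * qinv \<beta>)) \<otimes>\<^bsub>Q\<^esub> pi (qinv \<alpha>)
          = (pi \<beta> \<otimes>\<^bsub>Q\<^esub> pi (qinv \<beta>)) \<otimes>\<^bsub>Q\<^esub> (pi \<alpha> \<otimes>\<^bsub>Q\<^esub> pi (qinv \<alpha>))"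
        using \<alpha> \<beta> K_qinv pi_closed by (simp add: pi_mult Q.m_ac)
      also have "\<dots> = \<one>\<^bsub>Q\<^esub>"
        using \<alpha> \<beta> K_qinv pi_closed by (simp add: pi_mult[symmetric] qinv_right \<alpha>0 \<beta>0 pi_one)
      finally show ?thesis .
    qed
    ultimately show ?thesis using rp by simp
  qed
  finally have gp: "finprod Q (\<lambda>j. pi (\<gamma> j)) {..<n} = \<one>\<^bsub>Q\<^esub>" .
  have gG: "mon n id \<gamma> \<in> G_n n K H"
  proof -
    have "foldr (*) (map \<gamma> [0..<n]) 1 \<in> H"
      using pi_foldr[OF \<gamma>K] gp pi_eq_one by auto
    then have "qdiag n \<gamma> \<in> A_n n K H" unfolding A_n_def using \<gamma>K by blast
    then show ?thesis unfolding G_n_def qdiag_mon by (intro generate.incl) blast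
  qed
  have ginv: "inv\<^bsub>qmat_monoid n\<^esub> (mon n id \<gamma>) = mon n id \<gamma>'"
  proof (rule inv_qmat_eq[OF mon_carrier mon_carrier])
    show "qmat_mult n (mon n id \<gamma>) (mon n id \<gamma>') = qmat_one n"
      unfolding qmat_one_mon by (simp add: mon_mult) (rule mon_cong, simp add: g2)
    show "qmat_mult n (mon n id \<gamma>') (mon n id \<gamma>) = qmat_one n"
      unfolding qmat_one_mon by (simp add: mon_mult) (rule mon_cong, simp add: g1)
  qed
  let ?c = "\<lambda>A. qmat_mult n (qmat_mult n (mon n id \<gamma>) A) (mon n id \<gamma>')"
  have blk: "?c ` P_block n lam \<alpha> i = P_block n lam \<beta> i" if i: "1 \<le> i" "i \<le> length lam" for i
  proof -
    have "?c (mon n \<sigma> (\<lambda>j. dv \<alpha> (\<sigma> j) * dvi \<alpha> j)) = mon n \<sigma> (\<lambda>j. dv \<beta> (\<sigma> j) * dvi \<beta> j)"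
      if s: "\<sigma> permutes block lam i" for \<sigma>
    proof -
      have sn: "\<sigma> permutes {..<n}" using s block_sub[OF i(2)] part permutes_subset by blast
      have rs: "r (\<sigma> j) = r j" for j
      proof (cases "j \<in> block lam i")
        case True
        then have "\<sigma> j \<in> block lam i" using permutes_in_image[OF s] by simp
        then show ?thesis using rb i True by blast
      next
        case False then show ?thesis using permutes_not_in[OF s] by simp
      qed
      show ?thesis
        unfolding cj_mon[OF sn]
      proof (rule mon_cong)
        fix j assume j: "j < n"
        have sj: "\<sigma> j < n" using permutes_in_image[OF sn] j by simp
        show "\<gamma> (\<sigma> j) * (dv \<alpha> (\<sigma> j) * dvi \<alpha> j) * \<gamma>' j = dv \<beta> (\<sigma> j) * dvi \<beta> j"
          unfolding \<gamma>_def \<gamma>'_def rs using r0[OF j] \<alpha>0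
          by (simp add: mult.assoc cancel_l[OF dvi_dv] cancel_l[OF qinv_right])
      qed
    qed
    note key = this
    have "?c ` {mon n \<sigma> (\<lambda>j. dv \<alpha> (\<sigma> j) * dvi \<alpha> j) | \<sigma>. \<sigma> permutes block lam i}
        = {?c (mon n \<sigma> (\<lambda>j. dv \<alpha> (\<sigma> j) * dvi \<alpha> j)) | \<sigma>. \<sigma> permutes block lam i}" by blast
    also have "\<dots> = {mon n \<sigma> (\<lambda>j. dv \<beta> (\<sigma> j) * dvi \<beta> j) | \<sigma>. \<sigma> permutes block lam i}"
      using key by (intro Collect_cong) (metis (no_types, lifting))
    finally show ?thesis unfolding P_block_eq[OF \<alpha>0 i(2) part] P_block_eq[OF \<beta>0 i(2) part] .
  qed
  have SM: "\<forall>S\<in>set (map (P_block n lam \<alpha>) [1..<Suc (length lam)]). S \<subseteq> MonP n"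
  proof
    fix S assume "S \<in> set (map (P_block n lam \<alpha>) [1..<Suc (length lam)])"
    then obtain i where "i \<in> set [1..<Suc (length lam)]" "S = P_block n lam \<alpha> i" by auto
    then have i: "i \<le> length lam" "S = P_block n lam \<alpha> i" by auto
    have "\<And>\<sigma>. \<sigma> permutes block lam i \<Longrightarrow> \<sigma> permutes {..<n}"
      using block_sub[OF i(1)] part permutes_subset by blast
    then show "S \<subseteq> MonP n" unfolding i(2) P_block_eq[OF \<alpha>0 i(1) part] MonP_def by blast
  qed
  have "?c ` P_lam n lam \<alpha> = set_prod_list n (map (\<lambda>S. ?c ` S) (map (P_block n lam \<alpha>) [1..<Suc (length lam)]))"
    unfolding P_lam_def by (rule cj_set_prod[OF g1 g2 SM])
  also have "map (\<lambda>S. ?c ` S) (map (P_block n lam \<alpha>) [1..<Suc (length lam)]) = map (P_block n lam \<beta>) [1..<Suc (length lam)]"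
    unfolding map_map
  proof (rule map_cong[OF refl])
    fix x assume "x \<in> set [1..<Suc (length lam)]"
    then have "1 \<le> x" "x \<le> length lam" by auto
    then show "((\<lambda>S. ?c ` S) \<circ> P_block n lam \<alpha>) x = P_block n lam \<beta> x"
      unfolding comp_def by (rule blk)
  qed
  finally have "?c ` P_lam n lam \<alpha> = P_lam n lam \<beta>" unfolding P_lam_def .
  then show ?thesis unfolding conj_in_def ginv[symmetric] using gG by blast
qed

end



lemma gcd_list_bezout:
  "\<exists>u0 (u::nat \<Rightarrow> int). int (Gcd (set (m # lam))) = u0 * int m + (\<Sum>i<length lam. u i * int (lam ! i))"
proof (induction lam)
  case Nil
  show ?case by (intro exI[of _ 1]) simp
next
  case (Cons a l)
  obtain u0 u where IH: "int (Gcd (set (m # l))) = u0 * int m + (\<Sum>i<length l. u i * int (l ! i))"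
    using Cons by blast
  obtain s v where sv: "s * int a + v * int (Gcd (set (m # l))) = gcd (int a) (int (Gcd (set (m # l))))"
    using bezout_int by blast
  have G: "Gcd (set (m # a # l)) = gcd a (Gcd (set (m # l)))"
    by (simp add: insert_commute)
  define u' where "u' i = (if i = 0 then s else v * u (i - 1))" for i
  have "(\<Sum>i<length (a # l). u' i * int ((a # l) ! i)) = s * int a + (\<Sum>i<length l. v * u i * int (l ! i))"
    unfolding length_Cons sum.lessThan_Suc_shift by (simp add: u'_def)
  also have "\<dots> = s * int a + v * (\<Sum>i<length l. u i * int (l ! i))"
    by (simp add: sum_distrib_left mult.assoc)
  finally have "int (Gcd (set (m # a # l))) = (v * u0) * int m + (\<Sum>i<length (a # l). u' i * int ((a # l) ! i))"
    using G sv IH by (simp add: algebra_simps)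
  then show ?case by blast
qed

context KHsetup
begin

lemma order_pos: "0 < order Q"
  using monoid.order_gt_0_iff_finite[OF group.is_monoid[OF grpQ]] finQ by simp

lemma psum_le_n: "sum_list lam = n \<Longrightarrow> i \<le> length lam \<Longrightarrow> psum lam i \<le> n"
  using psum_mono[of i "length lam" lam] psum_length[of lam] by simp

lemma block_Suc: "block lam (Suc i) = {psum lam i..<psum lam (Suc i)}"
  by (simp add: block_def)

lemma cyc_fwd:
  assumes part: "sum_list lam = n" and pos: "\<forall>x\<in>set lam. 0 < x" and y: "\<forall>j<n. y j \<in> carrier Q"
    and yb: "\<forall>i. 1 \<le> i \<and> i \<le> length lam \<longrightarrow> (\<forall>a\<in>block lam i. \<forall>b\<in>block lam i. y a = y b)"
  shows "(finprod Q y {..<n}) [^]\<^bsub>Q\<^esub> (order Q div Gcd (set (order Q # lam))) = \<one>\<^bsub>Q\<^esub>"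
proof -
  interpret Q: comm_group Q by (rule cQ)
  let ?m = "order Q" and ?d = "Gcd (set (order Q # lam))"
  have dm: "?d dvd ?m" by (rule Gcd_dvd) simp
  have "i \<le> length lam \<Longrightarrow> (finprod Q y {..<psum lam i}) [^]\<^bsub>Q\<^esub> (?m div ?d) = \<one>\<^bsub>Q\<^esub>" for i
  proof (induction i)
    case 0 then show ?case by (simp add: psum_def)
  next
    case (Suc i)
    then have il: "i < length lam" by simp
    have ps: "psum lam (Suc i) = psum lam i + lam ! i" using psum_Suc[OF il] .
    have pn: "psum lam (Suc i) \<le> n" using psum_le_n[OF part] Suc.prems .
    have yc: "y \<in> {..<psum lam (Suc i)} \<rightarrow> carrier Q" using y pn by auto
    have split: "{..<psum lam (Suc i)} = {..<psum lam i} \<union> {psum lam i..<psum lam (Suc i)}"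
      using ps by auto
    let ?c = "y (psum lam i)"
    have "lam ! i > 0" using pos il by simp
    then have cC: "?c \<in> carrier Q" using y pn ps by simp
    have "finprod Q y {psum lam i..<psum lam (Suc i)} = finprod Q (\<lambda>_. ?c) {psum lam i..<psum lam (Suc i)}"
    proof (rule Q.finprod_cong')
      fix j assume j: "j \<in> {psum lam i..<psum lam (Suc i)}"
      then have "j \<in> block lam (Suc i)" "psum lam i \<in> block lam (Suc i)" by (auto simp: block_Suc)
      moreover have "1 \<le> Suc i \<and> Suc i \<le> length lam" using il by simp
      ultimately show "y j = ?c" using yb by blast
    qed (use y pn ps in auto)
    also have "\<dots> = ?c [^]\<^bsub>Q\<^esub> (lam ! i)"
      using cC ps by (subst Q.finprod_const) auto
    finally have B: "finprod Q y {psum lam i..<psum lam (Suc i)} = ?c [^]\<^bsub>Q\<^esub> (lam ! i)" .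
    have "finprod Q y {..<psum lam (Suc i)} = finprod Q y {..<psum lam i} \<otimes>\<^bsub>Q\<^esub> ?c [^]\<^bsub>Q\<^esub> (lam ! i)"
      unfolding split B[symmetric] using yc split by (intro Q.finprod_Un_disjoint) auto
    moreover have "(?c [^]\<^bsub>Q\<^esub> (lam ! i)) [^]\<^bsub>Q\<^esub> (?m div ?d) = \<one>\<^bsub>Q\<^esub>"
    proof -
      have dl: "?d dvd lam ! i" by (rule Gcd_dvd) (use il in simp)
      obtain u where u: "lam ! i = ?d * u" using dl by blast
      obtain v where v: "?m = ?d * v" using dm by blast
      have d0: "?d > 0" using order_pos v by (cases "?d = 0") auto
      have "lam ! i * (?m div ?d) = ?m * u" using u v d0 by simp
      then have "(?c [^]\<^bsub>Q\<^esub> (lam ! i)) [^]\<^bsub>Q\<^esub> (?m div ?d) = (?c [^]\<^bsub>Q\<^esub> ?m) [^]\<^bsub>Q\<^esub> u"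
        using cC by (simp add: Q.nat_pow_pow)
      also have "\<dots> = \<one>\<^bsub>Q\<^esub>" using Q.pow_order_eq_1[OF cC] by simp
      finally show ?thesis .
    qed
    moreover have "finprod Q y {..<psum lam i} \<in> carrier Q" using yc split by (intro Q.finprod_closed) auto
    ultimately show ?case
      using Suc cC by (simp add: Q.pow_mult_distrib Q.m_comm)
  qed
  from this[of "length lam"] show ?thesis by (simp add: psum_length part)
qed

end



context KHsetup
begin

lemma cyc_bwd:
  assumes part: "sum_list lam = n" and pos: "\<forall>x\<in>set lam. 0 < x" and x: "x \<in> carrier Q"
    and xp: "x [^]\<^bsub>Q\<^esub> (order Q div Gcd (set (order Q # lam))) = \<one>\<^bsub>Q\<^esub>"
  shows "\<exists>y. (\<forall>j<n. y j \<in> carrier Q) \<and>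
    (\<forall>i. 1 \<le> i \<and> i \<le> length lam \<longrightarrow> (\<forall>a\<in>block lam i. \<forall>b\<in>block lam i. y a = y b)) \<and>
    finprod Q y {..<n} = x"
proof -
  interpret Q: comm_group Q by (rule cQ)
  let ?m = "order Q" and ?d = "Gcd (set (order Q # lam))"
  obtain a where a: "a \<in> carrier Q" "subgroup_generated Q {a} = Q"
    using cyc unfolding cyclic_group_def by blast
  have ord: "group.ord Q a = ?m"
    using Q.cyclic_order_is_ord[OF a(1)] a(2) by simp
  have "carrier Q = generate Q {a}"
    using carrier_subgroup_generated[of Q "{a}"] a by simp
  then obtain e :: int where e: "x = a [^]\<^bsub>Q\<^esub> e"
    using Q.generate_pow[OF a(1)] x by auto
  have "a [^]\<^bsub>Q\<^esub> (e * int (?m div ?d)) = \<one>\<^bsub>Q\<^esub>"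
    using xp a(1) by (simp add: e Q.int_pow_pow[symmetric] int_pow_int)
  then have "int ?m dvd e * int (?m div ?d)"
    using Q.int_pow_eq_id[OF a(1)] ord by simp
  moreover have dm: "?d dvd ?m" by (rule Gcd_dvd) simp
  moreover have "int ?m = int ?d * int (?m div ?d)"
    using dvd_mult_div_cancel[OF dm] by (metis of_nat_mult)
  ultimately have "int ?d * int (?m div ?d) dvd e * int (?m div ?d)"
    by simp
  moreover have "?m div ?d \<noteq> 0"
  proof
    assume "?m div ?d = 0"
    then have "?m = 0" using dvd_mult_div_cancel[OF dm] by simp
    with order_pos show False by simp
  qed
  ultimately have "int ?d dvd e" by simp
  then obtain t where t: "e = int ?d * t" by blast
  obtain u0 u where bez: "int ?d = u0 * int ?m + (\<Sum>i<length lam. u i * int (lam ! i))"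
    using gcd_list_bezout[of ?m lam] by blast
  define c where "c i = a [^]\<^bsub>Q\<^esub> (t * u i)" for i
  have cC: "c i \<in> carrier Q" for i unfolding c_def using a(1) by simp
  define bidx where "bidx j = card {i. i < length lam \<and> psum lam (Suc i) \<le> j}" for j
  have bidx: "bidx j = i" if i: "i < length lam" "psum lam i \<le> j" "j < psum lam (Suc i)" for i j
  proof -
    have "{i'. i' < length lam \<and> psum lam (Suc i') \<le> j} = {..<i}"
    proof (rule Set.set_eqI, rule iffI)
      fix i' assume "i' \<in> {i'. i' < length lam \<and> psum lam (Suc i') \<le> j}"
      then have "psum lam (Suc i') \<le> j" by simp
      moreover have "i' \<ge> i \<Longrightarrow> psum lam (Suc i) \<le> psum lam (Suc i')" by (simp add: psum_mono)
      ultimately show "i' \<in> {..<i}" using i by (cases "i' \<ge> i") auto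
    next
      fix i' assume "i' \<in> {..<i}"
      then have "psum lam (Suc i') \<le> psum lam i" by (simp add: psum_mono)
      then show "i' \<in> {i'. i' < length lam \<and> psum lam (Suc i') \<le> j}" using i \<open>i' \<in> {..<i}\<close> by auto
    qed
    then show ?thesis unfolding bidx_def by simp
  qed
  define y where "y j = c (bidx j)" for j
  have yC: "\<forall>j<n. y j \<in> carrier Q" using cC by (simp add: y_def)
  have yb: "\<forall>i. 1 \<le> i \<and> i \<le> length lam \<longrightarrow> (\<forall>a\<in>block lam i. \<forall>b\<in>block lam i. y a = y b)"
  proof (intro allI impI ballI)
    fix i a' b' assume i: "1 \<le> i \<and> i \<le> length lam" and ab: "a' \<in> block lam i" "b' \<in> block lam i"
    obtain i0 where i0: "i = Suc i0" using i by (cases i) auto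
    have "bidx a' = i0" "bidx b' = i0" using ab i i0 by (auto simp: block_def intro!: bidx)
    then show "y a' = y b'" by (simp add: y_def)
  qed
  have prod: "finprod Q y {..<psum lam i} = a [^]\<^bsub>Q\<^esub> (t * (\<Sum>i'<i. u i' * int (lam ! i')))"
    if "i \<le> length lam" for i
    using that
  proof (induction i)
    case 0 then show ?case by (simp add: psum_def)
  next
    case (Suc i)
    then have il: "i < length lam" by simp
    have ps: "psum lam (Suc i) = psum lam i + lam ! i" using psum_Suc[OF il] .
    have split: "{..<psum lam (Suc i)} = {..<psum lam i} \<union> {psum lam i..<psum lam (Suc i)}"
      using ps by auto
    have yc: "y \<in> A \<rightarrow> carrier Q" for A using cC by (simp add: y_def)
    have "finprod Q y {psum lam i..<psum lam (Suc i)} = finprod Q (\<lambda>_. c i) {psum lam i..<psum lam (Suc i)}"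
    proof (rule Q.finprod_cong')
      fix j assume "j \<in> {psum lam i..<psum lam (Suc i)}"
      then show "y j = c i" using bidx[OF il] by (simp add: y_def)
    qed (auto simp: cC)
    also have "\<dots> = c i [^]\<^bsub>Q\<^esub> (lam ! i)" using cC ps by (subst Q.finprod_const) auto
    also have "\<dots> = a [^]\<^bsub>Q\<^esub> (t * u i * int (lam ! i))"
      unfolding c_def using a(1) by (simp add: Q.int_pow_pow[symmetric] int_pow_int)
    finally have B: "finprod Q y {psum lam i..<psum lam (Suc i)} = a [^]\<^bsub>Q\<^esub> (t * u i * int (lam ! i))" .
    have "finprod Q y {..<psum lam (Suc i)} = finprod Q y {..<psum lam i} \<otimes>\<^bsub>Q\<^esub> finprod Q y {psum lam i..<psum lam (Suc i)}"
      unfolding split using yc by (intro Q.finprod_Un_disjoint) auto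
    also have "\<dots> = a [^]\<^bsub>Q\<^esub> (t * (\<Sum>i'<i. u i' * int (lam ! i'))) \<otimes>\<^bsub>Q\<^esub> a [^]\<^bsub>Q\<^esub> (t * u i * int (lam ! i))"
      using Suc il B by simp
    also have "\<dots> = a [^]\<^bsub>Q\<^esub> (t * (\<Sum>i'<Suc i. u i' * int (lam ! i')))"
      using a(1) by (simp add: Q.int_pow_mult[symmetric] algebra_simps)
    finally show ?case .
  qed
  have "finprod Q y {..<n} = a [^]\<^bsub>Q\<^esub> (t * (\<Sum>i'<length lam. u i' * int (lam ! i')))"
    using prod[of "length lam"] by (simp add: psum_length part)
  also have "t * (\<Sum>i'<length lam. u i' * int (lam ! i')) = e + int ?m * (- t * u0)"
    using bez t by (simp add: algebra_simps)
  also have "a [^]\<^bsub>Q\<^esub> (e + int ?m * (- t * u0)) = x"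
  proof -
    have "a [^]\<^bsub>Q\<^esub> (int ?m * (- t * u0)) = (a [^]\<^bsub>Q\<^esub> (int ?m)) [^]\<^bsub>Q\<^esub> (- t * u0)"
      using a(1) by (simp add: Q.int_pow_pow)
    also have "\<dots> = \<one>\<^bsub>Q\<^esub>" using Q.pow_order_eq_1[OF a(1)] by (simp add: int_pow_int)
    finally have 1: "a [^]\<^bsub>Q\<^esub> (int ?m * (- t * u0)) = \<one>\<^bsub>Q\<^esub>" .
    have "a [^]\<^bsub>Q\<^esub> (e + int ?m * (- t * u0)) = a [^]\<^bsub>Q\<^esub> e \<otimes>\<^bsub>Q\<^esub> a [^]\<^bsub>Q\<^esub> (int ?m * (- t * u0))"
      by (rule Q.int_pow_mult[OF a(1)])
    also have "\<dots> = x" unfolding 1 e using a(1) by simp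
    finally show ?thesis .
  qed
  finally show ?thesis using yC yb by blast
qed

end



theorem proposition4p8:
  fixes n :: nat and K H :: "quat set" and lam :: "nat list" and \<alpha> \<beta> :: quat
  defines "KG \<equiv> quat_units\<lparr>carrier := K\<rparr>"
  assumes "n \<ge> 3"
    and "subgroup K quat_units" and "finite K"
    and "H \<lhd> KG"
    and "derived KG K \<subseteq> H"
    and "H \<noteq> {1}"
    and "cyclic_group (KG Mod H)"
    and "is_partition lam n"
    and "\<alpha> \<in> K" and "\<beta> \<in> K"
  shows "conj_in n (G_n n K H) (P_lam n lam \<alpha>) (P_lam n lam \<beta>) \<longleftrightarrow>
         group.ord (KG Mod H) (H #>\<^bsub>KG\<^esub> (\<alpha> \<otimes>\<^bsub>KG\<^esub> inv\<^bsub>KG\<^esub> \<beta>))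
           dvd card (rcosets\<^bsub>KG\<^esub> H) div Gcd (set (card (rcosets\<^bsub>KG\<^esub> H) # lam))"
proof -
  interpret KHsetup K H KG "KG Mod H"
    by (rule KHsetup.intro[OF KG_def[THEN meta_eq_to_obj_eq] refl assms(3) assms(4) assms(5) assms(8)])
  let ?Q = "KG Mod H"
  have part: "sum_list lam = n" and pos: "\<forall>x\<in>set lam. 0 < x"
    using assms(9) unfolding is_partition_def by auto
  have n0: "0 < n" using assms(2) by simp
  have \<alpha>: "\<alpha> \<in> K" and \<beta>: "\<beta> \<in> K" using assms(10,11) by auto
  have xeq: "H #>\<^bsub>KG\<^esub> (\<alpha> \<otimes>\<^bsub>KG\<^esub> inv\<^bsub>KG\<^esub> \<beta>) = pi (\<alpha> * qinv \<beta>)"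
    using inv_KG[OF \<beta>] by (simp add: pi_def)
  have xK: "\<alpha> * qinv \<beta> \<in> K" using K_mult[OF \<alpha> K_qinv[OF \<beta>]] .
  have xC: "pi (\<alpha> * qinv \<beta>) \<in> carrier ?Q" using pi_closed[OF xK] .
  have m: "card (rcosets\<^bsub>KG\<^esub> H) = order ?Q" using order_Q by simp
  have ordeq: "group.ord ?Q (pi (\<alpha> * qinv \<beta>)) dvd N \<longleftrightarrow> pi (\<alpha> * qinv \<beta>) [^]\<^bsub>?Q\<^esub> N = \<one>\<^bsub>?Q\<^esub>" for N :: nat
    using group.pow_eq_id[OF grpQ xC] by simp
  show ?thesis
    unfolding xeq m ordeq
  proof
    assume "conj_in n (G_n n K H) (P_lam n lam \<alpha>) (P_lam n lam \<beta>)"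
    then obtain g where g: "g \<in> G_n n K H"
      "(\<lambda>A. qmat_mult n (qmat_mult n g A) (inv\<^bsub>qmat_monoid n\<^esub> g)) ` P_lam n lam \<alpha> = P_lam n lam \<beta>"
      unfolding conj_in_def by blast
    obtain f where f: "\<forall>j<n. f j \<in> K"
      "\<forall>i. 1 \<le> i \<and> i \<le> length lam \<longrightarrow> (\<forall>a\<in>block lam i. \<forall>b\<in>block lam i. f a = f b)"
      "finprod ?Q (\<lambda>j. pi (f j)) {..<n} = pi (\<alpha> * qinv \<beta>)"
      using forward_mat[OF part n0 \<alpha> \<beta> g] by blast
    have "\<forall>j<n. pi (f j) \<in> carrier ?Q" using f(1) pi_closed by simp
    moreover have "\<forall>i. 1 \<le> i \<and> i \<le> length lam \<longrightarrow> (\<forall>a\<in>block lam i. \<forall>b\<in>block lam i. pi (f a) = pi (f b))"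
    proof (intro allI impI ballI)
      fix i a b assume "1 \<le> i \<and> i \<le> length lam" "a \<in> block lam i" "b \<in> block lam i"
      then have "f a = f b" using f(2) by blast
      then show "pi (f a) = pi (f b)" by simp
    qed
    ultimately have "(finprod ?Q (\<lambda>j. pi (f j)) {..<n}) [^]\<^bsub>?Q\<^esub> (order ?Q div Gcd (set (order ?Q # lam))) = \<one>\<^bsub>?Q\<^esub>"
      by (rule cyc_fwd[OF part pos])
    then show "pi (\<alpha> * qinv \<beta>) [^]\<^bsub>?Q\<^esub> (order ?Q div Gcd (set (order ?Q # lam))) = \<one>\<^bsub>?Q\<^esub>"
      unfolding f(3) .
  next
    assume "pi (\<alpha> * qinv \<beta>) [^]\<^bsub>?Q\<^esub> (order ?Q div Gcd (set (order ?Q # lam))) = \<one>\<^bsub>?Q\<^esub>"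
    then obtain y where y: "\<forall>j<n. y j \<in> carrier ?Q"
      "\<forall>i. 1 \<le> i \<and> i \<le> length lam \<longrightarrow> (\<forall>a\<in>block lam i. \<forall>b\<in>block lam i. y a = y b)"
      "finprod ?Q y {..<n} = pi (\<alpha> * qinv \<beta>)"
      using cyc_bwd[OF part pos xC] by blast
    define R where "R z = (SOME k. k \<in> K \<and> pi k = z)" for z
    have R: "R z \<in> K \<and> pi (R z) = z" if "z \<in> carrier ?Q" for z
    proof -
      have "z \<in> (\<lambda>x. H #>\<^bsub>KG\<^esub> x) ` K" using that carrier_FactGroup[of KG H] by simp
      then have "\<exists>k. k \<in> K \<and> pi k = z" by (auto simp: pi_def)
      then show ?thesis unfolding R_def by (rule someI_ex)
    qed
    define r where "r j = R (y j)" for j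
    have rK: "\<forall>j<n. r j \<in> K" using R y(1) by (simp add: r_def)
    have rb: "\<forall>i. 1 \<le> i \<and> i \<le> length lam \<longrightarrow> (\<forall>a\<in>block lam i. \<forall>b\<in>block lam i. r a = r b)"
    proof (intro allI impI ballI)
      fix i a b assume "1 \<le> i \<and> i \<le> length lam" "a \<in> block lam i" "b \<in> block lam i"
      then have "y a = y b" using y(2) by blast
      then show "r a = r b" by (simp add: r_def)
    qed
    have "finprod ?Q (\<lambda>j. pi (r j)) {..<n} = finprod ?Q y {..<n}"
      using R y(1) by (intro comm_monoid.finprod_cong'[OF comm_group.axioms(1)[OF cQ]]) (auto simp: r_def)
    then have rp: "finprod ?Q (\<lambda>j. pi (r j)) {..<n} = pi (\<alpha> * qinv \<beta>)" using y(3) by simp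
    show "conj_in n (G_n n K H) (P_lam n lam \<alpha>) (P_lam n lam \<beta>)"
      using backward_mat[OF part \<alpha> \<beta> rK rb rp] .
  qed
qed



end
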